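(* Let $\alpha\in(0,1)$, $0\le\gamma\le 1/\alpha$, $n_0,n\in\mathbb N$ with $n_0\le n$. Let $\xi_1,\dots,\xi_{n_0}$ be i.i.d. random variables with values in $[0,1]$ and c.d.f. $F_\xi$ satisfying $F_\xi(t)=\gamma t$ for all $t\in[0,\alpha]$, and let $\xi_{n_0+1},\dots,\xi_n$ be random variables with values in $[0,1]$, independent of $(\xi_1,\dots,\xi_{n_0})$. For $c_i=i\alpha/n$, $i=1,\dots,n$, let $R'_n=\max\{k\le n:\xi_{k:n}\le c_k\}$ (with $R'_n=-\infty$ if this set is empty) and $V'_n=|\{i\in\{1,\dots,n_0\}:\xi_i\le c_{R'_n}\}|$, where $c_{-\infty}=-\infty$. Then \[ \mathbb E\Big(\frac{V'_n}{R'_n\vee 1}\Big)=\frac{n_0}{n}\gamma\alpha. \]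
   Context: $\xi_{1:n}\le\dots\le\xi_{n:n}$ denote the order statistics of $\xi_1,\dots,\xi_n$. *)

theory Defs
  imports "HOL-Probability.Probability"
begin

definition order_stat :: "(nat \<Rightarrow> real) \<Rightarrow> nat \<Rightarrow> nat \<Rightarrow> real" where
  "order_stat x n k = sort (map x [1..<Suc n]) ! (k - 1)"

definition crit :: "real \<Rightarrow> nat \<Rightarrow> nat \<Rightarrow> real" where
  "crit \<alpha> n i = real i * \<alpha> / real n"

text \<open>R'_n = max {k <= n. x_(k:n) <= c_k}; the value 0 encodes -infinity (empty set).\<close>
definition stepup_R :: "real \<Rightarrow> nat \<Rightarrow> (nat \<Rightarrow> real) \<Rightarrow> nat" where
  "stepup_R \<alpha> n x =
     (if \<exists>k\<in>{1..n}. order_stat x n k \<le> crit \<alpha> n k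
      then Max {k\<in>{1..n}. order_stat x n k \<le> crit \<alpha> n k} else 0)"

text \<open>V'_n = #{i in 1..n0. x i <= c_{R'_n}}, with c_{-infinity} = -infinity (so V'=0 then).\<close>
definition stepup_V :: "real \<Rightarrow> nat \<Rightarrow> nat \<Rightarrow> (nat \<Rightarrow> real) \<Rightarrow> nat" where
  "stepup_V \<alpha> n0 n x =
     card {i\<in>{1..n0}. stepup_R \<alpha> n x \<noteq> 0 \<and> x i \<le> crit \<alpha> n (stepup_R \<alpha> n x)}"

end

theory Submission
  imports Defs
begin


definition cnt :: "nat \<Rightarrow> (nat \<Rightarrow> real) \<Rightarrow> real \<Rightarrow> nat" where
  "cnt n x t = card {j\<in>{1..n}. x j \<le> t}"

lemma sorted_count_le:
  fixes ys :: "real list"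
  assumes "sorted ys" "1 \<le> k" "k \<le> length ys"
  shows "ys ! (k - 1) \<le> t \<longleftrightarrow> k \<le> card {j. j < length ys \<and> ys ! j \<le> t}"
proof
  assume h: "ys ! (k - 1) \<le> t"
  have "{0..<k} \<subseteq> {j. j < length ys \<and> ys ! j \<le> t}"
  proof
    fix j assume "j \<in> {0..<k}"
    then have "j \<le> k - 1" "j < length ys" using assms by auto
    then have "ys ! j \<le> ys ! (k - 1)" using assms sorted_nth_mono by (metis diff_less le_trans less_one not_le)
    then show "j \<in> {j. j < length ys \<and> ys ! j \<le> t}" using h \<open>j < length ys\<close> by auto
  qed
  then show "k \<le> card {j. j < length ys \<and> ys ! j \<le> t}"
    by (metis card_atLeastLessThan card_mono finite_Collect_conjI finite_Collect_less_nat minus_nat.diff_0)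
next
  assume h: "k \<le> card {j. j < length ys \<and> ys ! j \<le> t}"
  show "ys ! (k - 1) \<le> t"
  proof (rule ccontr)
    assume "\<not> ys ! (k - 1) \<le> t"
    have "{j. j < length ys \<and> ys ! j \<le> t} \<subseteq> {0..<k-1}"
    proof
      fix j assume j: "j \<in> {j. j < length ys \<and> ys ! j \<le> t}"
      show "j \<in> {0..<k-1}"
      proof (rule ccontr)
        assume "j \<notin> {0..<k-1}"
        then have "k - 1 \<le> j" by auto
        then have "ys ! (k-1) \<le> ys ! j" using assms j sorted_nth_mono by auto
        then show False using j \<open>\<not> ys ! (k - 1) \<le> t\<close> by auto
      qed
    qed
    then have "card {j. j < length ys \<and> ys ! j \<le> t} \<le> k - 1"
      by (metis card_atLeastLessThan card_mono finite_atLeastLessThan minus_nat.diff_0)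
    then show False using h assms by auto
  qed
qed

lemma order_stat_le:
  assumes "k \<in> {1..n}"
  shows "order_stat x n k \<le> t \<longleftrightarrow> k \<le> cnt n x t"
proof -
  define xs where "xs = map x [1..<Suc n]"
  define ys where "ys = sort xs"
  have len: "length ys = n" by (simp add: ys_def xs_def)
  have "length (filter (\<lambda>v. v \<le> t) ys) = length (filter (\<lambda>v. v \<le> t) xs)"
    unfolding ys_def by (metis mset_filter mset_sort size_mset)
  also have "\<dots> = length (filter (\<lambda>j. x j \<le> t) [1..<Suc n])"
    by (simp add: xs_def filter_map comp_def)
  also have "\<dots> = card {j\<in>{1..n}. x j \<le> t}"
    by (subst distinct_length_filter) (auto intro!: arg_cong[where f=card])
  finally have c: "card {j. j < length ys \<and> ys ! j \<le> t} = cnt n x t"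
    by (simp add: cnt_def length_filter_conv_card)
  show ?thesis
    unfolding order_stat_def xs_def[symmetric] ys_def[symmetric] c[symmetric]
    using assms len by (intro sorted_count_le) (auto simp: ys_def)
qed

lemma R_alt:
  "stepup_R \<alpha> n x = (if \<exists>k\<in>{1..n}. k \<le> cnt n x (crit \<alpha> n k)
      then Max {k\<in>{1..n}. k \<le> cnt n x (crit \<alpha> n k)} else 0)"
proof -
  have "{k\<in>{1..n}. order_stat x n k \<le> crit \<alpha> n k} = {k\<in>{1..n}. k \<le> cnt n x (crit \<alpha> n k)}"
    using order_stat_le by blast
  then show ?thesis unfolding stepup_R_def using order_stat_le by metis
qed

lemma cnt_cong: "(\<And>j. j \<in> {1..n} \<Longrightarrow> x j = y j) \<Longrightarrow> cnt n x t = cnt n y t"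
  unfolding cnt_def by (metis (mono_tags, lifting) mem_Collect_eq Collect_cong)

lemma R_cong: "(\<And>j. j \<in> {1..n} \<Longrightarrow> x j = y j) \<Longrightarrow> stepup_R \<alpha> n x = stepup_R \<alpha> n y"
  unfolding R_alt using cnt_cong[of n x y] by simp

lemma crit_mono: "0 < \<alpha> \<Longrightarrow> a \<le> b \<Longrightarrow> crit \<alpha> n a \<le> crit \<alpha> n b"
  unfolding crit_def by (simp add: divide_right_mono)

lemma crit_nonneg: "0 < \<alpha> \<Longrightarrow> 0 \<le> crit \<alpha> n a"
  unfolding crit_def by simp

lemma key:
  fixes x :: "nat \<Rightarrow> real"
  assumes a: "0 < \<alpha>" and i: "i \<in> {1..n}"
  defines "r \<equiv> stepup_R \<alpha> n x" and "r' \<equiv> stepup_R \<alpha> n (x(i:=0))"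
  shows "r' \<in> {1..n}"
    and "(r \<noteq> 0 \<and> x i \<le> crit \<alpha> n r) \<longleftrightarrow> x i \<le> crit \<alpha> n r'"
    and "r \<noteq> 0 \<and> x i \<le> crit \<alpha> n r \<Longrightarrow> r = r'"
proof -
  define S where "S y = {k\<in>{1..n}. k \<le> cnt n y (crit \<alpha> n k)}" for y
  let ?x' = "x(i:=0)"
  have finS: "finite (S y)" for y by (simp add: S_def)
  have Rr: "stepup_R \<alpha> n y = (if S y \<noteq> {} then Max (S y) else 0)" for y
    unfolding R_alt S_def by auto
  have cnt_le: "cnt n x t \<le> cnt n ?x' t" if "0 \<le> t" for t
    unfolding cnt_def using that by (intro card_mono) auto
  have cnt_eq: "cnt n x t = cnt n ?x' t" if "0 \<le> t" "x i \<le> t" for t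
    unfolding cnt_def using that by (intro arg_cong[where f=card]) auto
  have sub: "S x \<subseteq> S ?x'"
  proof
    fix k assume "k \<in> S x"
    then have "k \<in> {1..n}" "k \<le> cnt n x (crit \<alpha> n k)" by (auto simp: S_def)
    moreover have "cnt n x (crit \<alpha> n k) \<le> cnt n ?x' (crit \<alpha> n k)"
      using cnt_le crit_nonneg[OF a] by blast
    ultimately show "k \<in> S ?x'" by (auto simp: S_def)
  qed
  have one: "1 \<in> S ?x'"
  proof -
    have "{i} \<subseteq> {j\<in>{1..n}. ?x' j \<le> crit \<alpha> n 1}" using i crit_nonneg[OF a] by auto
    then have "card {i} \<le> cnt n ?x' (crit \<alpha> n 1)" unfolding cnt_def
      by (intro card_mono) auto
    then have "1 \<le> cnt n ?x' (crit \<alpha> n 1)" by simp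
    then show ?thesis using i by (auto simp: S_def)
  qed
  then have rrdef: "r' = Max (S ?x')" using Rr unfolding r'_def by auto
  have rrin: "r' \<in> S ?x'" using rrdef one finS by (metis Max_in empty_iff)
  then show rr1: "r' \<in> {1..n}" by (auto simp: S_def)
  have bwd: "r = r' \<and> r \<noteq> 0" if h: "x i \<le> crit \<alpha> n r'"
  proof -
    have "cnt n x (crit \<alpha> n r') = cnt n ?x' (crit \<alpha> n r')"
      using h crit_nonneg[OF a] by (intro cnt_eq) auto
    then have "r' \<in> S x" using rrin by (auto simp: S_def)
    then have "S x \<noteq> {}" "r' \<le> Max (S x)" using finS by auto
    moreover have "Max (S x) \<le> r'" using sub rrdef finS \<open>S x \<noteq> {}\<close> by (metis Max_mono)
    ultimately show ?thesis using Rr[of x] rr1 unfolding r_def by auto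
  qed
  have fwd: "x i \<le> crit \<alpha> n r'" if h: "r \<noteq> 0 \<and> x i \<le> crit \<alpha> n r"
  proof -
    have "S x \<noteq> {}" using h Rr[of x] unfolding r_def by metis
    then have "r \<in> S x" using Rr[of x] finS unfolding r_def by (metis Max_in)
    then have "r \<le> r'" using sub rrdef finS by auto
    then show ?thesis using h crit_mono[OF a] by (meson order_trans)
  qed
  show "(r \<noteq> 0 \<and> x i \<le> crit \<alpha> n r) \<longleftrightarrow> x i \<le> crit \<alpha> n r'"
    using fwd bwd by blast
  show "r \<noteq> 0 \<and> x i \<le> crit \<alpha> n r \<Longrightarrow> r = r'" using fwd bwd by blast
qed

lemma inner_sum:
  assumes "r \<in> {1..n}"
  shows "(\<Sum>k\<in>{1..n}. (if r = k \<and> Q k then 1 / real k else 0)) = (if Q r then 1 / real r else 0)"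
proof -
  have "(\<Sum>k\<in>{1..n}. (if r = k \<and> Q k then 1 / real k else 0))
      = (\<Sum>k\<in>{1..n}. (if k = r then (if Q k then 1 / real k else 0) else 0))"
    by (intro sum.cong) auto
  also have "\<dots> = (if Q r then 1 / real r else 0)"
    using assms by (subst sum.delta) auto
  finally show ?thesis .
qed

lemma V_decomp:
  fixes x :: "nat \<Rightarrow> real"
  assumes a: "0 < \<alpha>" and n0n: "n0 \<le> n"
  shows "real (stepup_V \<alpha> n0 n x) / real (max (stepup_R \<alpha> n x) 1)
    = (\<Sum>i\<in>{1..n0}. \<Sum>k\<in>{1..n}. (if stepup_R \<alpha> n (x(i:=0)) = k \<and> x i \<le> crit \<alpha> n k then 1 / real k else 0))"
proof -
  let ?r = "stepup_R \<alpha> n x"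
  let ?P = "\<lambda>i. ?r \<noteq> 0 \<and> x i \<le> crit \<alpha> n ?r"
  have "real (stepup_V \<alpha> n0 n x) = (\<Sum>i\<in>{i\<in>{1..n0}. ?P i}. 1)"
    unfolding stepup_V_def by simp
  also have "\<dots> = (\<Sum>i\<in>{1..n0}. if ?P i then 1 else 0)"
    by (subst sum.inter_filter) auto
  finally have "real (stepup_V \<alpha> n0 n x) / real (max ?r 1) = (\<Sum>i\<in>{1..n0}. (if ?P i then 1 else 0) / real (max ?r 1))"
    by (simp add: sum_divide_distrib)
  also have "\<dots> = (\<Sum>i\<in>{1..n0}. \<Sum>k\<in>{1..n}. (if stepup_R \<alpha> n (x(i:=0)) = k \<and> x i \<le> crit \<alpha> n k then 1 / real k else 0))"
  proof (intro sum.cong refl)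
    fix i assume "i \<in> {1..n0}"
    then have i: "i \<in> {1..n}" using n0n by auto
    note K = key[OF a i, of x]
    show "(if ?P i then 1 else 0) / real (max ?r 1) = (\<Sum>k\<in>{1..n}. (if stepup_R \<alpha> n (x(i:=0)) = k \<and> x i \<le> crit \<alpha> n k then 1 / real k else 0))"
      using K by (subst inner_sum) (auto simp: max_def)
  qed
  finally show ?thesis .
qed

lemma R_eq_iff:
  assumes k: "k \<in> {1..n}"
  shows "stepup_R \<alpha> n x = k \<longleftrightarrow>
    (k \<le> cnt n x (crit \<alpha> n k) \<and> (\<forall>m\<in>{1..n}. m \<le> cnt n x (crit \<alpha> n m) \<longrightarrow> m \<le> k))"
proof -
  define S where "S = {k\<in>{1..n}. k \<le> cnt n x (crit \<alpha> n k)}"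
  have finS: "finite S" by (simp add: S_def)
  have Rr: "stepup_R \<alpha> n x = (if S \<noteq> {} then Max S else 0)"
    unfolding R_alt S_def by auto
  show ?thesis
  proof
    assume h: "stepup_R \<alpha> n x = k"
    then have "S \<noteq> {}" using Rr k by (auto split: if_splits)
    then have "k = Max S" using h Rr by auto
    then show "k \<le> cnt n x (crit \<alpha> n k) \<and> (\<forall>m\<in>{1..n}. m \<le> cnt n x (crit \<alpha> n m) \<longrightarrow> m \<le> k)"
      using finS \<open>S \<noteq> {}\<close> Max_in[OF finS] by (auto simp: S_def)
  next
    assume h: "k \<le> cnt n x (crit \<alpha> n k) \<and> (\<forall>m\<in>{1..n}. m \<le> cnt n x (crit \<alpha> n m) \<longrightarrow> m \<le> k)"
    then have "k \<in> S" using k by (auto simp: S_def)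
    moreover have "\<forall>m\<in>S. m \<le> k" using h by (auto simp: S_def)
    ultimately have "Max S = k" using finS by (intro Max_eqI) auto
    then show "stepup_R \<alpha> n x = k" using Rr \<open>k \<in> S\<close> by auto
  qed
qed

lemma cnt_sum: "real (cnt n x t) = (\<Sum>j\<in>{1..n}. if x j \<le> t then 1 else 0)"
proof -
  have "real (cnt n x t) = (\<Sum>j\<in>{j\<in>{1..n}. x j \<le> t}. 1)" unfolding cnt_def by simp
  also have "\<dots> = (\<Sum>j\<in>{1..n}. if x j \<le> t then 1 else 0)"
    by (subst sum.inter_filter) auto
  finally show ?thesis .
qed



context prob_space begin

lemma indep_single_rest:
  fixes \<xi> :: "nat \<Rightarrow> 'a \<Rightarrow> real"
  assumes indep_null: "indep_vars (\<lambda>_. borel) \<xi> {1..n0}"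
    and i: "i \<in> {1..n0}"
    and a: "a \<in> sets (PiM ({1..n0}-{i}) (\<lambda>_. borel))"
  shows "prob ({\<omega>\<in>space M. \<xi> i \<omega> \<le> c} \<inter> ((\<lambda>\<omega>. restrict (\<lambda>j. \<xi> j \<omega>) ({1..n0}-{i})) -` a \<inter> space M))
    = prob {\<omega>\<in>space M. \<xi> i \<omega> \<le> c} * prob ((\<lambda>\<omega>. restrict (\<lambda>j. \<xi> j \<omega>) ({1..n0}-{i})) -` a \<inter> space M)"
proof -
  define K where "K = case_bool {i} ({1..n0}-{i})"
  have iv: "indep_vars (\<lambda>b. PiM (K b) (\<lambda>_. borel)) (\<lambda>b \<omega>. restrict (\<lambda>j. \<xi> j \<omega>) (K b)) UNIV"
    using i by (intro indep_vars_restrict[OF indep_null]) (auto simp: K_def disjoint_family_on_def split: bool.split)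
  define E where "E = {f\<in>space (PiM {i} (\<lambda>_. borel::real measure)). f i \<le> c}"
  have E: "E \<in> sets (PiM {i} (\<lambda>_. borel))"
    unfolding E_def by measurable
  define A where "A = case_bool E a"
  have "prob (\<Inter>b\<in>UNIV. (\<lambda>\<omega>. restrict (\<lambda>j. \<xi> j \<omega>) (K b)) -` A b \<inter> space M)
    = (\<Prod>b\<in>UNIV. prob ((\<lambda>\<omega>. restrict (\<lambda>j. \<xi> j \<omega>) (K b)) -` A b \<inter> space M))"
    using E a by (intro indep_varsD[OF iv]) (auto simp: A_def K_def split: bool.split)
  moreover have "(\<lambda>\<omega>. restrict (\<lambda>j. \<xi> j \<omega>) (K True)) -` A True \<inter> space M = {\<omega>\<in>space M. \<xi> i \<omega> \<le> c}"
    by (auto simp: K_def A_def E_def space_PiM)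
  moreover have "(\<lambda>\<omega>. restrict (\<lambda>j. \<xi> j \<omega>) (K False)) -` A False \<inter> space M = (\<lambda>\<omega>. restrict (\<lambda>j. \<xi> j \<omega>) ({1..n0}-{i})) -` a \<inter> space M"
    by (auto simp: K_def A_def)
  ultimately show ?thesis
    by (simp add: UNIV_bool Int_commute)
qed

lemma indep_block:
  fixes \<xi> :: "nat \<Rightarrow> 'a \<Rightarrow> real"
  assumes rv: "\<And>i. i \<in> {1..n} \<Longrightarrow> \<xi> i \<in> borel_measurable M"
    and n0n: "n0 \<le> n"
    and indep_null: "indep_vars (\<lambda>_. borel) \<xi> {1..n0}"
    and indep_groups: "indep_var
          (PiM {1..n0} (\<lambda>_. borel)) (\<lambda>\<omega>. restrict (\<lambda>i. \<xi> i \<omega>) {1..n0})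
          (PiM {n0<..n} (\<lambda>_. borel)) (\<lambda>\<omega>. restrict (\<lambda>i. \<xi> i \<omega>) {n0<..n})"
    and i: "i \<in> {1..n0}"
    and T: "T \<in> sets (PiM ({1..n0}-{i}) (\<lambda>_. borel) \<Otimes>\<^sub>M PiM {n0<..n} (\<lambda>_. borel))"
  shows "prob ({\<omega>\<in>space M. \<xi> i \<omega> \<le> c} \<inter> ((\<lambda>\<omega>. (restrict (\<lambda>j. \<xi> j \<omega>) ({1..n0}-{i}), restrict (\<lambda>j. \<xi> j \<omega>) {n0<..n})) -` T \<inter> space M))
    = prob {\<omega>\<in>space M. \<xi> i \<omega> \<le> c} * prob ((\<lambda>\<omega>. (restrict (\<lambda>j. \<xi> j \<omega>) ({1..n0}-{i}), restrict (\<lambda>j. \<xi> j \<omega>) {n0<..n})) -` T \<inter> space M)"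
proof -
  define J1 where "J1 = {1..n0}-{i}"
  define X where "X = (\<lambda>\<omega>. restrict (\<lambda>j. \<xi> j \<omega>) {1..n0})"
  define X' where "X' = (\<lambda>\<omega>. restrict (\<lambda>j. \<xi> j \<omega>) J1)"
  define W where "W = (\<lambda>\<omega>. restrict (\<lambda>j. \<xi> j \<omega>) {n0<..n})"
  define Z where "Z = (\<lambda>\<omega>. (X' \<omega>, W \<omega>))"
  define P1 where "P1 = PiM J1 (\<lambda>_. borel::real measure)"
  define P2 where "P2 = PiM {n0<..n} (\<lambda>_. borel::real measure)"
  define P0 where "P0 = PiM {1..n0} (\<lambda>_. borel::real measure)"
  define A where "A = {\<omega>\<in>space M. \<xi> i \<omega> \<le> c}"
  have rvi: "\<xi> i \<in> borel_measurable M" using i n0n rv by auto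
  have Aev: "A \<in> events" unfolding A_def using rvi by measurable
  have X'm: "X' \<in> M \<rightarrow>\<^sub>M P1" unfolding X'_def P1_def J1_def
    using rv n0n by (intro measurable_restrict) auto
  have Wm: "W \<in> M \<rightarrow>\<^sub>M P2" unfolding W_def P2_def
    using rv n0n by (intro measurable_restrict) auto
  have Xm: "X \<in> M \<rightarrow>\<^sub>M P0" unfolding X_def P0_def
    using rv n0n by (intro measurable_restrict) auto
  define G0 where "G0 = {Z -` (a \<times> b) \<inter> space M | a b. a \<in> sets P1 \<and> b \<in> sets P2}"
  have G0ev: "G0 \<subseteq> events"
  proof
    fix g assume "g \<in> G0"
    then obtain a b where g: "g = Z -` (a \<times> b) \<inter> space M" "a \<in> sets P1" "b \<in> sets P2"
      unfolding G0_def by auto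
    have "g = (X' -` a \<inter> space M) \<inter> (W -` b \<inter> space M)" using g(1) by (auto simp: Z_def)
    then show "g \<in> events" using g X'm Wm by (auto intro!: sets.Int measurable_sets)
  qed
  have ind0: "indep_set {A} G0"
  proof (rule indep_setI)
    show "{A} \<subseteq> events" using Aev by auto
    show "G0 \<subseteq> events" by fact
    fix a' g assume "a' \<in> {A}" "g \<in> G0"
    then obtain a b where g: "g = Z -` (a \<times> b) \<inter> space M" "a \<in> sets P1" "b \<in> sets P2" and a': "a' = A"
      unfolding G0_def by auto
    define E1 where "E1 = {f\<in>space P0. f i \<le> c}"
    define E2 where "E2 = (\<lambda>f. restrict f J1) -` a \<inter> space P0"
    have E1: "E1 \<in> sets P0" unfolding E1_def P0_def using i by measurable
    have E2: "E2 \<in> sets P0" unfolding E2_def P0_def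
      using g(2) unfolding P1_def J1_def
      by (intro measurable_sets[OF measurable_restrict_subset]) auto
    have XA: "X -` E1 \<inter> space M = A"
      using i by (auto simp: E1_def A_def X_def P0_def space_PiM)
    have XE2: "X -` E2 \<inter> space M = X' -` a \<inter> space M"
      by (auto simp: E2_def X_def X'_def J1_def P0_def space_PiM restrict_def cong: if_cong)
    have gX: "g = X -` E2 \<inter> space M \<inter> (W -` b \<inter> space M)"
      using g(1) XE2 by (auto simp: Z_def)
    have AgX: "A \<inter> g = X -` (E1 \<inter> E2) \<inter> space M \<inter> (W -` b \<inter> space M)"
      using g(1) XE2 XA by (auto simp: Z_def)
    have indXW: "prob (X -` E \<inter> space M \<inter> (W -` F \<inter> space M)) = prob (X -` E \<inter> space M) * prob (W -` F \<inter> space M)"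
      if "E \<in> sets P0" "F \<in> sets P2" for E F
    proof -
      have "prob ((\<lambda>x. (X x, W x)) -` (E \<times> F) \<inter> space M) = prob (X -` E \<inter> space M) * prob (W -` F \<inter> space M)"
        using indep_varD[OF indep_groups[folded X_def W_def], of E F] that unfolding P0_def P2_def by auto
      moreover have "(\<lambda>x. (X x, W x)) -` (E \<times> F) \<inter> space M = X -` E \<inter> space M \<inter> (W -` F \<inter> space M)" by auto
      ultimately show ?thesis by simp
    qed
    have "prob (a' \<inter> g) = prob (X -` (E1 \<inter> E2) \<inter> space M) * prob (W -` b \<inter> space M)"
      unfolding a' AgX using E1 E2 g(3) by (intro indXW) auto
    also have "X -` (E1 \<inter> E2) \<inter> space M = A \<inter> (X' -` a \<inter> space M)"
      using XA XE2 by auto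
    also have "prob (A \<inter> (X' -` a \<inter> space M)) = prob A * prob (X' -` a \<inter> space M)"
      unfolding A_def X'_def J1_def
      using indep_single_rest[OF indep_null i, of a c] g(2) unfolding P1_def J1_def by simp
    also have "prob A * prob (X' -` a \<inter> space M) * prob (W -` b \<inter> space M) = prob A * prob g"
    proof -
      have "prob g = prob (X' -` a \<inter> space M) * prob (W -` b \<inter> space M)"
        using indXW[OF E2 g(3)] gX XE2 by simp
      then show ?thesis by simp
    qed
    finally show "prob (a' \<inter> g) = prob a' * prob g" using a' by simp
  qed
  have stab: "Int_stable G0"
  proof (rule Int_stableI)
    fix g g' assume "g \<in> G0" "g' \<in> G0"
    then obtain a b a2 b2 where "g = Z -` (a \<times> b) \<inter> space M" "a \<in> sets P1" "b \<in> sets P2"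
      "g' = Z -` (a2 \<times> b2) \<inter> space M" "a2 \<in> sets P1" "b2 \<in> sets P2"
      unfolding G0_def by auto
    then show "g \<inter> g' \<in> G0" unfolding G0_def
      by (intro CollectI exI[of _ "a \<inter> a2"] exI[of _ "b \<inter> b2"]) auto
  qed
  have ind1: "indep_set (sigma_sets (space M) {A}) (sigma_sets (space M) G0)"
    by (rule indep_set_sigma_sets[OF ind0 _ stab]) (auto simp: Int_stable_def)
  have Zsp: "Z \<in> space M \<rightarrow> space P1 \<times> space P2"
    using X'm Wm by (auto simp: Z_def measurable_def)
  have "Z -` T \<inter> space M \<in> {Z -` A \<inter> space M | A. A \<in> sigma_sets (space P1 \<times> space P2) {a \<times> b | a b. a \<in> sets P1 \<and> b \<in> sets P2}}"
    using T unfolding sets_pair_measure P1_def P2_def J1_def by auto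
  also have "\<dots> = sigma_sets (space M) {Z -` A \<inter> space M | A. A \<in> {a \<times> b | a b. a \<in> sets P1 \<and> b \<in> sets P2}}"
    by (rule sigma_sets_vimage_commute[OF Zsp])
  also have "{Z -` A \<inter> space M | A. A \<in> {a \<times> b | a b. a \<in> sets P1 \<and> b \<in> sets P2}} = G0"
    unfolding G0_def by auto
  finally have ZT: "Z -` T \<inter> space M \<in> sigma_sets (space M) G0" .
  have "prob (A \<inter> (Z -` T \<inter> space M)) = prob A * prob (Z -` T \<inter> space M)"
    by (rule indep_setD[OF ind1 _ ZT]) auto
  then show ?thesis unfolding A_def Z_def X'_def W_def J1_def .
qed

lemma R_event_sets:
  fixes J1 J2 :: "nat set" and h :: "((nat \<Rightarrow> real) \<times> (nat \<Rightarrow> real)) \<Rightarrow> nat \<Rightarrow> real"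
  defines "N \<equiv> PiM J1 (\<lambda>_. borel::real measure) \<Otimes>\<^sub>M PiM J2 (\<lambda>_. borel::real measure)"
  defines "h \<equiv> \<lambda>p j. if j \<in> J1 then fst p j else if j \<in> J2 then snd p j else 0"
  assumes k: "k \<in> {1..n}"
  shows "{p\<in>space N. stepup_R \<alpha> n (h p) = k} \<in> sets N"
proof -
  have hm[measurable]: "(\<lambda>p. h p j) \<in> borel_measurable N" for j
  proof (cases "j \<in> J1")
    case True
    then show ?thesis unfolding h_def N_def
      by (simp add: measurable_compose[OF measurable_fst measurable_component_singleton])
  next
    case False
    show ?thesis
    proof (cases "j \<in> J2")
      case True
      then show ?thesis using False unfolding h_def N_def
        by (simp add: measurable_compose[OF measurable_snd measurable_component_singleton])
    qed (use False in \<open>simp add: h_def\<close>)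
  qed
  have cm: "Measurable.pred N (\<lambda>p. m \<le> cnt n (h p) t)" for m t
  proof -
    have "Measurable.pred N (\<lambda>p. real m \<le> (\<Sum>j\<in>{1..n}. if h p j \<le> t then 1 else 0))"
      by measurable
    then show ?thesis unfolding cnt_sum[symmetric] by simp
  qed
  have "Measurable.pred N (\<lambda>p. k \<le> cnt n (h p) (crit \<alpha> n k) \<and> (\<forall>m\<in>{1..n}. m \<le> cnt n (h p) (crit \<alpha> n m) \<longrightarrow> m \<le> k))"
    by (intro pred_intros_logic pred_intros_finite cm) auto
  then have "Measurable.pred N (\<lambda>p. stepup_R \<alpha> n (h p) = k)"
    by (subst R_eq_iff[OF k])
  then show ?thesis by (simp add: pred_def)
qed

lemma per_i:
  fixes \<xi> :: "nat \<Rightarrow> 'a \<Rightarrow> real"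
  assumes rv: "\<And>i. i \<in> {1..n} \<Longrightarrow> \<xi> i \<in> borel_measurable M"
    and alpha: "0 < \<alpha>"
    and n0n: "n0 \<le> n"
    and indep_null: "indep_vars (\<lambda>_. borel) \<xi> {1..n0}"
    and indep_groups: "indep_var
          (PiM {1..n0} (\<lambda>_. borel)) (\<lambda>\<omega>. restrict (\<lambda>i. \<xi> i \<omega>) {1..n0})
          (PiM {n0<..n} (\<lambda>_. borel)) (\<lambda>\<omega>. restrict (\<lambda>i. \<xi> i \<omega>) {n0<..n})"
    and cdf: "\<And>i t. i \<in> {1..n0} \<Longrightarrow> t \<in> {0..\<alpha>} \<Longrightarrow>
                 measure M {\<omega> \<in> space M. \<xi> i \<omega> \<le> t} = \<gamma> * t"
    and i: "i \<in> {1..n0}"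
  shows "integrable M (\<lambda>\<omega>. \<Sum>k\<in>{1..n}. if stepup_R \<alpha> n ((\<lambda>j. \<xi> j \<omega>)(i:=0)) = k \<and> \<xi> i \<omega> \<le> crit \<alpha> n k then 1 / real k else 0)"
    and "(\<integral>\<omega>. (\<Sum>k\<in>{1..n}. if stepup_R \<alpha> n ((\<lambda>j. \<xi> j \<omega>)(i:=0)) = k \<and> \<xi> i \<omega> \<le> crit \<alpha> n k then 1 / real k else 0) \<partial>M)
       = \<gamma> * \<alpha> / real n"
proof -
  define J1 where "J1 = {1..n0}-{i}"
  define J2 where "J2 = {n0<..n}"
  define N where "N = PiM J1 (\<lambda>_. borel::real measure) \<Otimes>\<^sub>M PiM J2 (\<lambda>_. borel::real measure)"
  define h where "h = (\<lambda>(p::(nat \<Rightarrow> real) \<times> (nat \<Rightarrow> real)) j. if j \<in> J1 then fst p j else if j \<in> J2 then snd p j else 0)"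
  define Z where "Z = (\<lambda>\<omega>. (restrict (\<lambda>j. \<xi> j \<omega>) J1, restrict (\<lambda>j. \<xi> j \<omega>) J2))"
  define Ri where "Ri = (\<lambda>\<omega>. stepup_R \<alpha> n ((\<lambda>j. \<xi> j \<omega>)(i:=0)))"
  define B where "B = (\<lambda>k. {\<omega>\<in>space M. Ri \<omega> = k})"
  define E where "E = (\<lambda>k. {\<omega>\<in>space M. Ri \<omega> = k \<and> \<xi> i \<omega> \<le> crit \<alpha> n k})"
  have n1: "1 \<le> n" using i n0n by auto
  have in1n: "i \<in> {1..n}" using i n0n by auto
  have Zm: "Z \<in> M \<rightarrow>\<^sub>M N"
    unfolding Z_def N_def J1_def J2_def using rv n0n
    by (intro measurable_Pair measurable_restrict) auto
  have Zeq: "stepup_R \<alpha> n (h (Z \<omega>)) = Ri \<omega>" for \<omega>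
    unfolding Ri_def using i
    by (intro R_cong) (auto simp: h_def Z_def J1_def J2_def)
  have Ri_range: "Ri \<omega> \<in> {1..n}" for \<omega>
    unfolding Ri_def using key(1)[OF alpha in1n] by blast
  have Bset: "B k = Z -` {p\<in>space N. stepup_R \<alpha> n (h p) = k} \<inter> space M" for k
    using Zeq measurable_space[OF Zm] by (auto simp: B_def)
  have Tk: "{p\<in>space N. stepup_R \<alpha> n (h p) = k} \<in> sets N" if "k \<in> {1..n}" for k
    unfolding N_def h_def using R_event_sets[OF that] by (simp add: case_prod_beta)
  have Bev: "B k \<in> events" if "k \<in> {1..n}" for k
    unfolding Bset using Tk[OF that] Zm by (intro measurable_sets[OF Zm])
  have rvi: "\<xi> i \<in> borel_measurable M" using in1n rv by auto
  have Aev: "{\<omega>\<in>space M. \<xi> i \<omega> \<le> c} \<in> events" for c using rvi by measurable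
  have Eeq: "E k = {\<omega>\<in>space M. \<xi> i \<omega> \<le> crit \<alpha> n k} \<inter> B k" for k
    by (auto simp: E_def B_def)
  have Eev: "E k \<in> events" if "k \<in> {1..n}" for k unfolding Eeq using Bev[OF that] Aev by auto
  have critin: "crit \<alpha> n k \<in> {0..\<alpha>}" if "k \<in> {1..n}" for k
    using that alpha n1 by (auto simp: crit_def field_simps)
  have probE: "prob (E k) = \<gamma> * crit \<alpha> n k * prob (B k)" if k: "k \<in> {1..n}" for k
  proof -
    have "prob (E k) = prob {\<omega>\<in>space M. \<xi> i \<omega> \<le> crit \<alpha> n k} * prob (B k)"
      unfolding Eeq Bset Z_def J1_def J2_def
      using Tk[OF k] unfolding N_def J1_def J2_def
      by (intro indep_block[OF rv n0n indep_null indep_groups i]) auto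
    then show ?thesis using cdf[OF i critin[OF k]] by simp
  qed
  have pw: "(\<Sum>k\<in>{1..n}. if Ri \<omega> = k \<and> \<xi> i \<omega> \<le> crit \<alpha> n k then 1 / real k else 0)
      = (\<Sum>k\<in>{1..n}. (1 / real k) * indicator (E k) \<omega>)" if "\<omega> \<in> space M" for \<omega>
    using that by (intro sum.cong) (auto simp: E_def indicator_def)
  have intE: "integrable M (\<lambda>\<omega>. (1 / real k) * indicator (E k) \<omega>)" if "k \<in> {1..n}" for k
    using Eev[OF that] by (intro integrable_mult_right integrable_real_indicator) (auto simp: less_top[symmetric])
  have int: "integrable M (\<lambda>\<omega>. \<Sum>k\<in>{1..n}. (1 / real k) * indicator (E k) \<omega>)"
    using intE by (rule Bochner_Integration.integrable_sum[where f="\<lambda>k \<omega>. 1 / real k * indicator (E k) \<omega>"])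
  show "integrable M (\<lambda>\<omega>. \<Sum>k\<in>{1..n}. if stepup_R \<alpha> n ((\<lambda>j. \<xi> j \<omega>)(i:=0)) = k \<and> \<xi> i \<omega> \<le> crit \<alpha> n k then 1 / real k else 0)"
    using int pw unfolding Ri_def by (subst Bochner_Integration.integrable_cong[of M M _ "\<lambda>\<omega>. \<Sum>k\<in>{1..n}. (1 / real k) * indicator (E k) \<omega>"]) auto
  have sumB: "(\<Sum>k\<in>{1..n}. prob (B k)) = 1"
  proof -
    have "(\<Sum>k\<in>{1..n}. prob (B k)) = (\<Sum>k\<in>{1..n}. \<integral>\<omega>. indicator (B k) \<omega> \<partial>M)"
      using Bev by (simp add: integral_indicator Int_absorb2)
    also have "\<dots> = (\<integral>\<omega>. (\<Sum>k\<in>{1..n}. indicator (B k) \<omega>) \<partial>M)"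
      using Bev by (intro Bochner_Integration.integral_sum[where f="\<lambda>k \<omega>. indicator (B k) \<omega>", symmetric] integrable_real_indicator) (auto simp: less_top[symmetric])
    also have "\<dots> = (\<integral>\<omega>. 1 \<partial>M)"
    proof (intro Bochner_Integration.integral_cong refl)
      fix \<omega> assume "\<omega> \<in> space M"
      then have "(\<Sum>k\<in>{1..n}. indicator (B k) \<omega>) = (\<Sum>k\<in>{1..n}. if k = Ri \<omega> then 1 else (0::real))"
        by (intro sum.cong) (auto simp: B_def indicator_def)
      also have "\<dots> = 1" using Ri_range[of \<omega>] by (subst sum.delta) auto
      finally show "(\<Sum>k\<in>{1..n}. indicator (B k) \<omega>) = (1::real)" .
    qed
    also have "\<dots> = 1" by (simp add: prob_space)
    finally show ?thesis .
  qed
  have "(\<integral>\<omega>. (\<Sum>k\<in>{1..n}. if stepup_R \<alpha> n ((\<lambda>j. \<xi> j \<omega>)(i:=0)) = k \<and> \<xi> i \<omega> \<le> crit \<alpha> n k then 1 / real k else 0) \<partial>M)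
     = (\<integral>\<omega>. (\<Sum>k\<in>{1..n}. (1 / real k) * indicator (E k) \<omega>) \<partial>M)"
    using pw unfolding Ri_def by (intro Bochner_Integration.integral_cong) auto
  also have "\<dots> = (\<Sum>k\<in>{1..n}. (1 / real k) * prob (E k))"
    using intE Eev by (subst Bochner_Integration.integral_sum) (auto simp: integral_indicator Int_absorb2)
  also have "\<dots> = (\<Sum>k\<in>{1..n}. \<gamma> * \<alpha> / real n * prob (B k))"
    using probE by (intro sum.cong) (auto simp: crit_def)
  also have "\<dots> = \<gamma> * \<alpha> / real n"
    using sumB by (metis mult.right_neutral sum_distrib_left)
  finally show "(\<integral>\<omega>. (\<Sum>k\<in>{1..n}. if stepup_R \<alpha> n ((\<lambda>j. \<xi> j \<omega>)(i:=0)) = k \<and> \<xi> i \<omega> \<le> crit \<alpha> n k then 1 / real k else 0) \<partial>M)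
       = \<gamma> * \<alpha> / real n" .
qed

end

theorem lemma2p2:
  fixes M :: "'a measure" and \<xi> :: "nat \<Rightarrow> 'a \<Rightarrow> real"
    and \<alpha> \<gamma> :: real and n0 n :: nat
  assumes P: "prob_space M"
    and alpha: "0 < \<alpha>" "\<alpha> < 1"
    and gamma: "0 \<le> \<gamma>" "\<gamma> \<le> 1 / \<alpha>"
    and n0n: "n0 \<le> n"
    and rv: "\<And>i. i \<in> {1..n} \<Longrightarrow> \<xi> i \<in> borel_measurable M"
    and range01: "\<And>i \<omega>. i \<in> {1..n} \<Longrightarrow> \<omega> \<in> space M \<Longrightarrow> \<xi> i \<omega> \<in> {0..1}"
    and indep_null: "prob_space.indep_vars M (\<lambda>_. borel) \<xi> {1..n0}"
    and ident: "\<And>i j. i \<in> {1..n0} \<Longrightarrow> j \<in> {1..n0} \<Longrightarrow>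
                 distr M borel (\<xi> i) = distr M borel (\<xi> j)"
    and cdf: "\<And>i t. i \<in> {1..n0} \<Longrightarrow> t \<in> {0..\<alpha>} \<Longrightarrow>
                 measure M {\<omega> \<in> space M. \<xi> i \<omega> \<le> t} = \<gamma> * t"
    and indep_groups: "prob_space.indep_var M
          (PiM {1..n0} (\<lambda>_. borel)) (\<lambda>\<omega>. restrict (\<lambda>i. \<xi> i \<omega>) {1..n0})
          (PiM {n0<..n} (\<lambda>_. borel)) (\<lambda>\<omega>. restrict (\<lambda>i. \<xi> i \<omega>) {n0<..n})"
  shows "(\<integral>\<omega>. real (stepup_V \<alpha> n0 n (\<lambda>i. \<xi> i \<omega>))
              / real (max (stepup_R \<alpha> n (\<lambda>i. \<xi> i \<omega>)) 1) \<partial>M)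
         = real n0 / real n * \<gamma> * \<alpha>"
proof -
  interpret prob_space M by (rule P)
  define F where "F = (\<lambda>i \<omega>. \<Sum>k\<in>{1..n}. if stepup_R \<alpha> n ((\<lambda>j. \<xi> j \<omega>)(i:=0)) = k \<and> \<xi> i \<omega> \<le> crit \<alpha> n k then 1 / real k else (0::real))"
  have "(\<integral>\<omega>. real (stepup_V \<alpha> n0 n (\<lambda>i. \<xi> i \<omega>)) / real (max (stepup_R \<alpha> n (\<lambda>i. \<xi> i \<omega>)) 1) \<partial>M)
      = (\<integral>\<omega>. (\<Sum>i\<in>{1..n0}. F i \<omega>) \<partial>M)"
    unfolding F_def using V_decomp[OF alpha(1) n0n] by (intro Bochner_Integration.integral_cong) auto
  also have "\<dots> = (\<Sum>i\<in>{1..n0}. integral\<^sup>L M (F i))"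
    using per_i(1)[OF rv alpha(1) n0n indep_null indep_groups cdf] unfolding F_def
    by (intro Bochner_Integration.integral_sum) auto
  also have "\<dots> = (\<Sum>i\<in>{1..n0}. \<gamma> * \<alpha> / real n)"
    using per_i(2)[OF rv alpha(1) n0n indep_null indep_groups cdf] unfolding F_def
    by (intro sum.cong) auto
  also have "\<dots> = real n0 / real n * \<gamma> * \<alpha>" by simp
  finally show ?thesis .
qed

end
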